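(* Let $u$ be any configuration on $K_{m,n}$. Then there exists a proof $f$ for the rank of $u$ whose support is contained in $B_n$, i.e. with $f_{a_i}=0$ for all $i=1,\dots,m$.
   Context: Let $m,n\ge 1$. $K_{m,n}$ is the complete bipartite graph with vertex set $V=A_m\sqcup B_n$, $A_m=\{a_1,\dots,a_m\}$, $B_n=\{b_1,\dots,b_n\}$, with exactly one edge $\{a_i,b_j\}$ for every $i,j$; $a_m$ is the sink. A configuration is a function $u:V\to\mathbb Z$; $\mathrm{degree}(u)=\sum_{c}u_c$. For $c\in V$ with graph degree $d_c$, $\Delta^{(c)}=d_c e_c-\sum_{c'\text{ adjacent to }c}e_{c'}$, where $e_c$ is the indicator configuration of $c$. Two configurations are toppling equivalent if their difference is an integer combination of the $\Delta^{(c)}$. A configuration is effective if it is toppling equivalent to a non-negative configuration. $\mathrm{rank}(u)=-1+\min\{\mathrm{degree}(f): f\ge 0,\ u-f\text{ not effective}\}$. A proof for the rank of $u$ is a non-negative $f$ with $u-f$ not effective and $\mathrm{degree}(f)=\mathrm{rank}(u)+1$. The support of a non-negative configuration $f$ is $\{c\in V: f_c>0\}$. *)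

theory Defs
  imports Main
begin

text \<open>Vertices of K_{m,n}: A i (a_i, 1 \<le> i \<le> m) and B j (b_j, 1 \<le> j \<le> n).
 The sink a_m plays no role in the definitions of equivalence, effectiveness and rank.\<close>

datatype vert = A nat | B nat

definition verts :: "nat \<Rightarrow> nat \<Rightarrow> vert set" where
  "verts m n = A ` {1..m} \<union> B ` {1..n}"

definition is_config :: "nat \<Rightarrow> nat \<Rightarrow> (vert \<Rightarrow> int) \<Rightarrow> bool" where
  "is_config m n u \<longleftrightarrow> (\<forall>v. v \<notin> verts m n \<longrightarrow> u v = 0)"

fun adj :: "nat \<Rightarrow> nat \<Rightarrow> vert \<Rightarrow> vert \<Rightarrow> bool" where
  "adj m n (A i) (B j) \<longleftrightarrow> 1 \<le> i \<and> i \<le> m \<and> 1 \<le> j \<and> j \<le> n"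
| "adj m n (B j) (A i) \<longleftrightarrow> 1 \<le> i \<and> i \<le> m \<and> 1 \<le> j \<and> j \<le> n"
| "adj m n _ _ \<longleftrightarrow> False"

definition gdeg :: "nat \<Rightarrow> nat \<Rightarrow> vert \<Rightarrow> int" where
  "gdeg m n c = int (card {c' \<in> verts m n. adj m n c c'})"

definition Delta :: "nat \<Rightarrow> nat \<Rightarrow> vert \<Rightarrow> vert \<Rightarrow> int" where
  "Delta m n c = (\<lambda>v. (if v = c then gdeg m n c else 0) - (if adj m n c v then 1 else 0))"

definition degree :: "nat \<Rightarrow> nat \<Rightarrow> (vert \<Rightarrow> int) \<Rightarrow> int" where
  "degree m n u = (\<Sum>v\<in>verts m n. u v)"

definition toppling_equiv :: "nat \<Rightarrow> nat \<Rightarrow> (vert \<Rightarrow> int) \<Rightarrow> (vert \<Rightarrow> int) \<Rightarrow> bool" where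
  "toppling_equiv m n u w \<longleftrightarrow>
     (\<exists>z :: vert \<Rightarrow> int. \<forall>v\<in>verts m n. u v - w v = (\<Sum>c\<in>verts m n. z c * Delta m n c v))"

definition nonneg :: "nat \<Rightarrow> nat \<Rightarrow> (vert \<Rightarrow> int) \<Rightarrow> bool" where
  "nonneg m n f \<longleftrightarrow> is_config m n f \<and> (\<forall>v\<in>verts m n. 0 \<le> f v)"

definition effective :: "nat \<Rightarrow> nat \<Rightarrow> (vert \<Rightarrow> int) \<Rightarrow> bool" where
  "effective m n u \<longleftrightarrow> (\<exists>g. nonneg m n g \<and> toppling_equiv m n u g)"

definition rank :: "nat \<Rightarrow> nat \<Rightarrow> (vert \<Rightarrow> int) \<Rightarrow> int" where
  "rank m n u = -1 + Inf {degree m n f | f. nonneg m n f \<and> \<not> effective m n (\<lambda>v. u v - f v)}"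

definition rank_proof :: "nat \<Rightarrow> nat \<Rightarrow> (vert \<Rightarrow> int) \<Rightarrow> (vert \<Rightarrow> int) \<Rightarrow> bool" where
  "rank_proof m n u f \<longleftrightarrow> nonneg m n f \<and> \<not> effective m n (\<lambda>v. u v - f v)
      \<and> degree m n f = rank m n u + 1"

definition support :: "nat \<Rightarrow> nat \<Rightarrow> (vert \<Rightarrow> int) \<Rightarrow> vert set" where
  "support m n f = {c \<in> verts m n. f c > 0}"

end

theory Submission
  imports Defs
begin

lemma A_in_verts[simp]: "A i \<in> verts m n \<longleftrightarrow> 1 \<le> i \<and> i \<le> m"
  by (auto simp: verts_def)
lemma B_in_verts[simp]: "B j \<in> verts m n \<longleftrightarrow> 1 \<le> j \<and> j \<le> n"
  by (auto simp: verts_def)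

lemma gdeg_A: "1 \<le> i \<Longrightarrow> i \<le> m \<Longrightarrow> gdeg m n (A i) = int n"
proof -
  assume h: "1 \<le> i" "i \<le> m"
  have "{c' \<in> verts m n. adj m n (A i) c'} = B ` {1..n}"
    using h by (auto simp: verts_def elim: adj.elims)
  moreover have "card (B ` {1..n}) = n" by (simp add: card_image inj_on_def)
  ultimately show ?thesis by (simp add: gdeg_def)
qed

lemma gdeg_B: "1 \<le> j \<Longrightarrow> j \<le> n \<Longrightarrow> gdeg m n (B j) = int m"
proof -
  assume h: "1 \<le> j" "j \<le> n"
  have "{c' \<in> verts m n. adj m n (B j) c'} = A ` {1..m}"
    using h by (auto simp: verts_def elim: adj.elims)
  moreover have "card (A ` {1..m}) = m" by (simp add: card_image inj_on_def)
  ultimately show ?thesis by (simp add: gdeg_def)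
qed

lemma sum_verts: "(\<Sum>v\<in>verts m n. g v) = (\<Sum>i=1..m. g (A i)) + (\<Sum>j=1..n. g (B j))"
proof -
  have "(\<Sum>v\<in>verts m n. g v) = sum g (A ` {1..m}) + sum g (B ` {1..n})"
    unfolding verts_def by (rule sum.union_disjoint) auto
  also have "sum g (A ` {1..m}) = (\<Sum>i=1..m. g (A i))" by (simp add: sum.reindex inj_on_def)
  also have "sum g (B ` {1..n}) = (\<Sum>j=1..n. g (B j))" by (simp add: sum.reindex inj_on_def)
  finally show ?thesis .
qed

lemma topple_A:
  assumes "1 \<le> i" "i \<le> m"
  shows "(\<Sum>c\<in>verts m n. z c * Delta m n c (A i)) = int n * z (A i) - (\<Sum>j=1..n. z (B j))"
proof -
  have 1: "(\<Sum>i'=1..m. z (A i') * Delta m n (A i') (A i)) = (\<Sum>i'=1..m. if i' = i then int n * z (A i) else 0)"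
    by (rule sum.cong) (auto simp: Delta_def gdeg_A)
  have 2: "(\<Sum>j=1..n. z (B j) * Delta m n (B j) (A i)) = (\<Sum>j=1..n. - z (B j))"
    by (rule sum.cong) (use assms in \<open>auto simp: Delta_def\<close>)
  show ?thesis unfolding sum_verts 1 2 using assms by (simp add: sum_negf)
qed

lemma topple_B:
  assumes "1 \<le> j" "j \<le> n"
  shows "(\<Sum>c\<in>verts m n. z c * Delta m n c (B j)) = int m * z (B j) - (\<Sum>i=1..m. z (A i))"
proof -
  have 1: "(\<Sum>j'=1..n. z (B j') * Delta m n (B j') (B j)) = (\<Sum>j'=1..n. if j' = j then int m * z (B j) else 0)"
    by (rule sum.cong) (auto simp: Delta_def gdeg_B)
  have 2: "(\<Sum>i=1..m. z (A i) * Delta m n (A i) (B j)) = (\<Sum>i=1..m. - z (A i))"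
    by (rule sum.cong) (use assms in \<open>auto simp: Delta_def\<close>)
  show ?thesis unfolding sum_verts 1 2 using assms by (simp add: sum_negf)
qed

lemma div_succ: "0 < (n::int) \<Longrightarrow> (a+1) div n = a div n + (if n dvd (a+1) then 1 else 0)"
proof -
  assume n: "0 < n"
  define q r where "q = a div n" and "r = a mod n"
  have a: "a = n * q + r" by (simp add: q_def r_def)
  have r: "0 \<le> r" "r < n" using n by (auto simp: r_def)
  show ?thesis
  proof (cases "r + 1 = n")
    case True
    then have "a + 1 = n * (q + 1)" using a by (simp add: algebra_simps)
    then show ?thesis using n by (simp add: q_def)
  next
    case False
    then have r1: "0 \<le> r + 1" "r + 1 < n" using r by auto
    have e: "a + 1 = (r + 1) + q * n" using a by (simp add: algebra_simps)
    have "(a + 1) div n = q" unfolding e using r1 n by simp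
    moreover have "(a + 1) mod n = r + 1" unfolding e using r1 n by simp
    ultimately show ?thesis using r1 r by (simp add: q_def dvd_eq_mod_eq_0)
  qed
qed

lemma le_div: "0 < (n::int) \<Longrightarrow> n * x \<le> a \<Longrightarrow> x \<le> a div n"
proof -
  assume n: "0 < n" and h: "n * x \<le> a"
  have "(n * x) div n \<le> a div n" using h n by (rule zdiv_mono1)
  then show ?thesis using n by simp
qed

lemma mul_div_le: "0 < (n::int) \<Longrightarrow> n * (a div n) \<le> a"
proof -
  assume n: "0 < n"
  have "0 \<le> a mod n" using n by simp
  moreover have "n * (a div n) = a - a mod n" by (rule minus_mod_eq_mult_div[symmetric])
  ultimately show ?thesis by linarith
qed

definition FF :: "nat \<Rightarrow> nat \<Rightarrow> (vert \<Rightarrow> int) \<Rightarrow> int \<Rightarrow> int" where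
  "FF m n Q Y = (\<Sum>i=1..m. (Q (A i) + Y) div int n)"
definition GG :: "nat \<Rightarrow> nat \<Rightarrow> (vert \<Rightarrow> int) \<Rightarrow> int \<Rightarrow> int" where
  "GG m n Q X = (\<Sum>j=1..n. (Q (B j) + X) div int m)"

lemma FF_mono: "1 \<le> n \<Longrightarrow> Y \<le> Y' \<Longrightarrow> FF m n Q Y \<le> FF m n Q Y'"
  unfolding FF_def by (intro sum_mono zdiv_mono1) auto
lemma GG_mono: "1 \<le> m \<Longrightarrow> X \<le> X' \<Longrightarrow> GG m n Q X \<le> GG m n Q X'"
  unfolding GG_def by (intro sum_mono zdiv_mono1) auto

lemma crit:
  fixes m n :: nat and Q :: "vert \<Rightarrow> int"
  assumes m: "1 \<le> m" and n: "1 \<le> n"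
  shows "effective m n Q \<longleftrightarrow> (\<exists>X Y. X \<le> FF m n Q Y \<and> Y \<le> GG m n Q X)"
proof
  assume "effective m n Q"
  then obtain g z where g: "nonneg m n g"
    and z: "\<forall>v\<in>verts m n. Q v - g v = (\<Sum>c\<in>verts m n. z c * Delta m n c v)"
    unfolding effective_def toppling_equiv_def by blast
  define X where "X = (\<Sum>i=1..m. z (A i))"
  define Y where "Y = (\<Sum>j=1..n. z (B j))"
  have "X \<le> FF m n Q Y" unfolding X_def FF_def
  proof (rule sum_mono)
    fix i assume i: "i \<in> {1..m}"
    have "Q (A i) - g (A i) = int n * z (A i) - Y"
      using z[rule_format, of "A i"] i topple_A[where z=z and n=n] by (simp add: Y_def)
    moreover have "0 \<le> g (A i)" using g i by (auto simp: nonneg_def)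
    ultimately have "int n * z (A i) \<le> Q (A i) + Y" by linarith
    then show "z (A i) \<le> (Q (A i) + Y) div int n" using n by (intro le_div) auto
  qed
  moreover have "Y \<le> GG m n Q X" unfolding Y_def GG_def
  proof (rule sum_mono)
    fix j assume j: "j \<in> {1..n}"
    have "Q (B j) - g (B j) = int m * z (B j) - X"
      using z[rule_format, of "B j"] j topple_B[where z=z and m=m] by (simp add: X_def)
    moreover have "0 \<le> g (B j)" using g j by (auto simp: nonneg_def)
    ultimately have "int m * z (B j) \<le> Q (B j) + X" by linarith
    then show "z (B j) \<le> (Q (B j) + X) div int m" using m by (intro le_div) auto
  qed
  ultimately show "\<exists>X Y. X \<le> FF m n Q Y \<and> Y \<le> GG m n Q X" by blast
next
  assume "\<exists>X Y. X \<le> FF m n Q Y \<and> Y \<le> GG m n Q X"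
  then obtain X Y where XY: "X \<le> FF m n Q Y" "Y \<le> GG m n Q X" by blast
  define x where "x i = (Q (A i) + Y) div int n - (if i = 1 then FF m n Q Y - X else 0)" for i
  define y where "y j = (Q (B j) + X) div int m - (if j = 1 then GG m n Q X - Y else 0)" for j
  define z where "z v = (case v of A i \<Rightarrow> x i | B j \<Rightarrow> y j)" for v
  have sx: "(\<Sum>i=1..m. z (A i)) = X"
  proof -
    have "(\<Sum>i=1..m. z (A i)) = FF m n Q Y - (\<Sum>i=1..m. (if i = 1 then FF m n Q Y - X else 0))"
      by (simp add: z_def x_def FF_def sum_subtractf)
    also have "\<dots> = X" using m by simp
    finally show ?thesis .
  qed
  have sy: "(\<Sum>j=1..n. z (B j)) = Y"
  proof -
    have "(\<Sum>j=1..n. z (B j)) = GG m n Q X - (\<Sum>j=1..n. (if j = 1 then GG m n Q X - Y else 0))"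
      by (simp add: z_def y_def GG_def sum_subtractf)
    also have "\<dots> = Y" using n by simp
    finally show ?thesis .
  qed
  define g where "g v = (if v \<in> verts m n then Q v - (\<Sum>c\<in>verts m n. z c * Delta m n c v) else 0)" for v
  have "nonneg m n g"
    unfolding nonneg_def is_config_def
  proof (intro conjI allI impI ballI)
    fix v assume "v \<notin> verts m n" then show "g v = 0" by (simp add: g_def)
  next
    fix v assume v: "v \<in> verts m n"
    show "0 \<le> g v"
    proof (cases v)
      case (A i)
      then have i: "1 \<le> i" "i \<le> m" using v by auto
      have "g v = Q (A i) - int n * x i + Y"
        using A i topple_A[where z=z and n=n] sy by (simp add: g_def z_def)
      moreover have "x i \<le> (Q (A i) + Y) div int n" using XY by (simp add: x_def)
      then have "int n * x i \<le> int n * ((Q (A i) + Y) div int n)" by (intro mult_left_mono) auto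
      moreover have "int n * ((Q (A i) + Y) div int n) \<le> Q (A i) + Y" using n by (intro mul_div_le) auto
      ultimately show ?thesis by linarith
    next
      case (B j)
      then have j: "1 \<le> j" "j \<le> n" using v by auto
      have "g v = Q (B j) - int m * y j + X"
        using B j topple_B[where z=z and m=m] sx by (simp add: g_def z_def)
      moreover have "y j \<le> (Q (B j) + X) div int m" using XY by (simp add: y_def)
      then have "int m * y j \<le> int m * ((Q (B j) + X) div int m)" by (intro mult_left_mono) auto
      moreover have "int m * ((Q (B j) + X) div int m) \<le> Q (B j) + X" using m by (intro mul_div_le) auto
      ultimately show ?thesis by linarith
    qed
  qed
  moreover have "toppling_equiv m n Q g"
    unfolding toppling_equiv_def by (rule exI[of _ z]) (simp add: g_def)
  ultimately show "effective m n Q" unfolding effective_def by blast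
qed

lemma noneff:
  fixes m n :: nat and Q :: "vert \<Rightarrow> int"
  assumes m: "1 \<le> m" and n: "1 \<le> n"
  shows "\<not> effective m n Q \<longleftrightarrow> (\<forall>Y. GG m n Q (FF m n Q Y) < Y)"
  unfolding crit[OF m n]
  by (meson GG_mono[OF m] order.trans not_le order_refl)


lemma FF_D':
  assumes n: "1 \<le> n" and i0: "1 \<le> i0" "i0 \<le> m"
  shows "FF m n (\<lambda>v. D v + (if v = A i0 then 1 else 0) - (if v = B j then c else 0)) Y
       = FF m n D Y + (if int n dvd D (A i0) + Y + 1 then 1 else 0)"
proof -
  have e: "(D (A i0) + 1 + Y) div int n = (D (A i0) + Y) div int n + (if int n dvd D (A i0) + Y + 1 then 1 else 0)"
    using div_succ[of "int n" "D (A i0) + Y"] n by (simp add: algebra_simps)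
  have "FF m n (\<lambda>v. D v + (if v = A i0 then 1 else 0) - (if v = B j then c else 0)) Y
      = (\<Sum>i=1..m. (D (A i) + Y) div int n + (if i = i0 then (if int n dvd D (A i0) + Y + 1 then 1 else 0) else 0))"
    unfolding FF_def
    apply (rule sum.cong[OF refl])
    subgoal for i using e by (cases "i = i0") (auto simp: algebra_simps)
    done
  also have "\<dots> = FF m n D Y + (if int n dvd D (A i0) + Y + 1 then 1 else 0)"
    using i0 by (simp add: sum.distrib FF_def)
  finally show ?thesis .
qed

lemma FF_D'_le:
  assumes n: "1 \<le> n"
  shows "FF m n (\<lambda>v. D v + (if v = A i0 then 1 else 0) - (if v = B j then c else 0)) Y \<le> FF m n D (Y + 1)"
  unfolding FF_def using n by (intro sum_mono zdiv_mono1) auto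

lemma GG_D'_le:
  assumes m: "1 \<le> m" and c: "0 \<le> c"
  shows "GG m n (\<lambda>v. D v + (if v = A i0 then 1 else 0) - (if v = B j then c else 0)) X \<le> GG m n D X"
  unfolding GG_def using m c by (intro sum_mono zdiv_mono1) auto

lemma GG_D'_dvd:
  assumes m: "1 \<le> m" and j: "1 \<le> j" "j \<le> n" and dv: "int m dvd D (B j) + X"
  shows "GG m n (\<lambda>v. D v + (if v = A i0 then 1 else 0) - (if v = B j then 1 else 0)) X = GG m n D X - 1"
proof -
  have e: "(D (B j) - 1 + X) div int m = (D (B j) + X) div int m - 1"
    using div_succ[of "int m" "D (B j) + X - 1"] m dv by (simp add: algebra_simps)
  have "GG m n (\<lambda>v. D v + (if v = A i0 then 1 else 0) - (if v = B j then 1 else 0)) X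
      = (\<Sum>j'=1..n. (D (B j') + X) div int m - (if j' = j then 1 else 0))"
    unfolding GG_def
    apply (rule sum.cong[OF refl])
    subgoal for j' using e by (cases "j' = j") (auto simp: algebra_simps)
    done
  also have "\<dots> = GG m n D X - 1"
    using j by (simp add: sum_subtractf GG_def)
  finally show ?thesis .
qed

lemma FF_shift:
  assumes n: "1 \<le> n"
  shows "FF m n D (Y + int n * k) = FF m n D Y + int m * k"
proof -
  have "FF m n D (Y + int n * k) = (\<Sum>i=1..m. (D (A i) + Y) div int n + k)"
    unfolding FF_def
  proof (rule sum.cong)
    fix i show "(D (A i) + (Y + int n * k)) div int n = (D (A i) + Y) div int n + k"
    proof -
      have e: "D (A i) + (Y + int n * k) = (D (A i) + Y) + k * int n" by (simp add: algebra_simps)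
      show ?thesis unfolding e using n by simp
    qed
  qed simp
  then show ?thesis by (simp add: sum.distrib FF_def)
qed

lemma move:
  fixes m n :: nat and D :: "vert \<Rightarrow> int"
  assumes m: "1 \<le> m" and n: "1 \<le> n" and i0: "1 \<le> i0" "i0 \<le> m"
    and ne: "\<not> effective m n D"
  shows "\<exists>j c. 1 \<le> j \<and> j \<le> n \<and> (c = 0 \<or> c = (1::int)) \<and>
     \<not> effective m n (\<lambda>v. D v + (if v = A i0 then 1 else 0) - (if v = B j then c else 0))"
proof -
  have neD: "\<And>Y. GG m n D (FF m n D Y) < Y" using ne noneff[OF m n] by blast
  show ?thesis
  proof (cases "\<exists>Y0. int n dvd D (A i0) + Y0 + 1 \<and> Y0 \<le> GG m n D (FF m n D Y0 + 1)")
    case False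
    define D' where "D' = (\<lambda>v. D v + (if v = A i0 then 1 else 0) - (if v = B 1 then (0::int) else 0))"
    have "\<forall>Y. GG m n D' (FF m n D' Y) < Y"
    proof
      fix Y
      show "GG m n D' (FF m n D' Y) < Y"
      proof (cases "int n dvd D (A i0) + Y + 1")
        case True
        then have "FF m n D' Y = FF m n D Y + 1" using FF_D'[OF n i0, of D 1 0 Y] by (simp add: D'_def)
        moreover have "GG m n D' (FF m n D Y + 1) \<le> GG m n D (FF m n D Y + 1)"
          unfolding D'_def by (rule GG_D'_le[OF m]) simp
        ultimately show ?thesis using False True by fastforce
      next
        case F2: False
        then have "FF m n D' Y = FF m n D Y" using FF_D'[OF n i0, of D 1 0 Y] by (simp add: D'_def)
        moreover have "GG m n D' (FF m n D Y) \<le> GG m n D (FF m n D Y)"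
          unfolding D'_def by (rule GG_D'_le[OF m]) simp
        ultimately show ?thesis using neD[of Y] by simp
      qed
    qed
    then have "\<not> effective m n D'" using noneff[OF m n] by blast
    then show ?thesis unfolding D'_def using n by blast
  next
    case True
    then obtain Y0 where Y0: "int n dvd D (A i0) + Y0 + 1" "Y0 \<le> GG m n D (FF m n D Y0 + 1)" by blast
    define F0 where "F0 = FF m n D Y0"
    have "GG m n D F0 < GG m n D (F0 + 1)" using neD[of Y0] Y0 by (simp add: F0_def)
    then obtain j where j: "1 \<le> j" "j \<le> n" "(D (B j) + F0) div int m < (D (B j) + (F0 + 1)) div int m"
    proof -
      assume r: "\<And>j. 1 \<le> j \<Longrightarrow> j \<le> n \<Longrightarrow> (D (B j) + F0) div int m < (D (B j) + (F0 + 1)) div int m \<Longrightarrow> thesis"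
      show thesis
      proof (rule ccontr)
        assume "\<not> thesis"
        then have "\<forall>j\<in>{1..n}. (D (B j) + (F0 + 1)) div int m \<le> (D (B j) + F0) div int m"
          using r \<open>\<not> thesis\<close> by (metis atLeastAtMost_iff not_less)
        then have "GG m n D (F0 + 1) \<le> GG m n D F0" unfolding GG_def by (intro sum_mono) blast
        then show False using \<open>GG m n D F0 < GG m n D (F0 + 1)\<close> by simp
      qed
    qed
    have dvj: "int m dvd D (B j) + F0 + 1"
    proof (rule ccontr)
      assume "\<not> ?thesis"
      then show False using div_succ[of "int m" "D (B j) + F0"] m j(3) by (simp add: add.assoc)
    qed
    define D' where "D' = (\<lambda>v. D v + (if v = A i0 then 1 else 0) - (if v = B j then (1::int) else 0))"
    have "\<forall>Y. GG m n D' (FF m n D' Y) < Y"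
    proof
      fix Y
      show "GG m n D' (FF m n D' Y) < Y"
      proof (cases "int n dvd D (A i0) + Y + 1")
        case True
        then have FF': "FF m n D' Y = FF m n D Y + 1" using FF_D'[OF n i0, of D j 1 Y] by (simp add: D'_def)
        have "int n dvd (D (A i0) + Y + 1) - (D (A i0) + Y0 + 1)" using True Y0(1) by (rule dvd_diff)
        then obtain k where k: "Y - Y0 = int n * k" by (auto simp: dvd_def)
        then have "Y = Y0 + int n * k" by simp
        then have FFY: "FF m n D Y = F0 + int m * k" using FF_shift[OF n] by (simp add: F0_def)
        have "int m dvd D (B j) + F0 + 1 + int m * k" using dvj by simp
        then have "int m dvd D (B j) + (FF m n D Y + 1)" using FFY by (simp add: algebra_simps)
        then have "GG m n D' (FF m n D Y + 1) = GG m n D (FF m n D Y + 1) - 1"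
          unfolding D'_def by (rule GG_D'_dvd[OF m j(1,2)])
        moreover have "FF m n D Y + 1 \<le> FF m n D (Y + 1)"
          using FF_D'_le[OF n, of m D i0 j 0 Y] FF_D'[OF n i0, of D j 0 Y] True by simp
        then have "GG m n D (FF m n D Y + 1) \<le> GG m n D (FF m n D (Y + 1))" by (rule GG_mono[OF m])
        moreover have "GG m n D (FF m n D (Y + 1)) < Y + 1" by (rule neD)
        ultimately show ?thesis using FF' by simp
      next
        case F2: False
        then have "FF m n D' Y = FF m n D Y" using FF_D'[OF n i0, of D j 1 Y] by (simp add: D'_def)
        moreover have "GG m n D' (FF m n D Y) \<le> GG m n D (FF m n D Y)"
          unfolding D'_def by (rule GG_D'_le[OF m]) simp
        ultimately show ?thesis using neD[of Y] by simp
      qed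
    qed
    then have "\<not> effective m n D'" using noneff[OF m n] by blast
    then show ?thesis unfolding D'_def using j by blast
  qed
qed

lemma eff_degree:
  fixes m n :: nat and D :: "vert \<Rightarrow> int"
  assumes m: "1 \<le> m" and n: "1 \<le> n" and e: "effective m n D"
  shows "0 \<le> degree m n D"
proof -
  obtain X Y where XY: "X \<le> FF m n D Y" "Y \<le> GG m n D X" using e crit[OF m n] by blast
  have "int n * FF m n D Y = (\<Sum>i=1..m. int n * ((D (A i) + Y) div int n))"
    by (simp add: FF_def sum_distrib_left)
  also have "\<dots> \<le> (\<Sum>i=1..m. D (A i) + Y)"
    using n by (intro sum_mono mul_div_le) auto
  also have "\<dots> = (\<Sum>i=1..m. D (A i)) + int m * Y" by (simp add: sum.distrib)
  finally have 1: "int n * FF m n D Y \<le> (\<Sum>i=1..m. D (A i)) + int m * Y" .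
  have "int m * GG m n D X = (\<Sum>j=1..n. int m * ((D (B j) + X) div int m))"
    by (simp add: GG_def sum_distrib_left)
  also have "\<dots> \<le> (\<Sum>j=1..n. D (B j) + X)"
    using m by (intro sum_mono mul_div_le) auto
  also have "\<dots> = (\<Sum>j=1..n. D (B j)) + int n * X" by (simp add: sum.distrib)
  finally have 2: "int m * GG m n D X \<le> (\<Sum>j=1..n. D (B j)) + int n * X" .
  have "int n * X \<le> int n * FF m n D Y" using XY(1) by (intro mult_left_mono) auto
  moreover have "int m * Y \<le> int m * GG m n D X" using XY(2) by (intro mult_left_mono) auto
  ultimately show ?thesis using 1 2 by (simp add: degree_def sum_verts)
qed


theorem lemma8p2:
  fixes m n :: nat and u :: "vert \<Rightarrow> int"
  assumes "1 \<le> m" and "1 \<le> n" and "is_config m n u"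
  shows "\<exists>f. rank_proof m n u f \<and> support m n f \<subseteq> B ` {1..n}
             \<and> (\<forall>i\<in>{1..m}. f (A i) = 0)"
proof -
  note m = assms(1) and n = assms(2)
  define S where "S = {degree m n f | f. nonneg m n f \<and> \<not> effective m n (\<lambda>v. u v - f v)}"
  have rank_eq: "rank m n u = -1 + Inf S" by (simp add: rank_def S_def)
  have S_nonneg: "\<And>s. s \<in> S \<Longrightarrow> 0 \<le> s"
    unfolding S_def degree_def nonneg_def by (auto intro!: sum_nonneg)
  have bdd: "bdd_below S" using S_nonneg by (auto simp: bdd_below_def)
  define f0 where "f0 v = (if v \<in> verts m n then \<bar>u v\<bar> + (if v = B 1 then 1 else 0) else 0)" for v
  have nn0: "nonneg m n f0" by (auto simp: nonneg_def is_config_def f0_def)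
  have "degree m n (\<lambda>v. u v - f0 v) \<le> (\<Sum>v\<in>verts m n. - (if v = B 1 then 1 else 0))"
    unfolding degree_def by (intro sum_mono) (auto simp: f0_def)
  also have "\<dots> = -1"
  proof -
    have fin: "finite (verts m n)" by (simp add: verts_def)
    show ?thesis using n by (simp add: sum_negf sum.delta[OF fin] sum.delta'[OF fin])
  qed
  finally have "\<not> effective m n (\<lambda>v. u v - f0 v)" using eff_degree[OF m n] by fastforce
  then have "degree m n f0 \<in> S" using nn0 unfolding S_def by blast
  then have ex: "\<exists>k::nat. int k \<in> S" using S_nonneg by (metis nonneg_int_cases)
  define k0 where "k0 = (LEAST k::nat. int k \<in> S)"
  have k0S: "int k0 \<in> S" unfolding k0_def using ex by (rule LeastI_ex)
  have k0min: "\<And>s. s \<in> S \<Longrightarrow> int k0 \<le> s"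
  proof -
    fix s assume s: "s \<in> S"
    then have "int (nat s) \<in> S" using S_nonneg by simp
    then have "k0 \<le> nat s" unfolding k0_def by (rule Least_le)
    then show "int k0 \<le> s" using S_nonneg[OF s] by linarith
  qed
  have InfS: "Inf S = int k0" using k0S k0min by (rule cInf_eq_minimum)
  obtain fmin where fmin0: "nonneg m n fmin" "\<not> effective m n (\<lambda>v. u v - fmin v)" "degree m n fmin = int k0"
    using k0S unfolding S_def by auto
  then have fmin: "nonneg m n fmin" "\<not> effective m n (\<lambda>v. u v - fmin v)" "degree m n fmin = Inf S"
    using InfS by auto
  have main: "\<And>f. nonneg m n f \<Longrightarrow> \<not> effective m n (\<lambda>v. u v - f v) \<Longrightarrow> degree m n f = Inf S
     \<Longrightarrow> (\<Sum>i=1..m. f (A i)) = int k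
     \<Longrightarrow> \<exists>g. nonneg m n g \<and> \<not> effective m n (\<lambda>v. u v - g v) \<and> degree m n g = Inf S \<and> (\<forall>i\<in>{1..m}. g (A i) = 0)"
    for k
  proof (induction k)
    case 0
    have "\<forall>i\<in>{1..m}. f (A i) = 0"
    proof -
      have "\<forall>i\<in>{1..m}. 0 \<le> f (A i)" using 0(1) by (auto simp: nonneg_def)
      then show ?thesis using 0(4) sum_nonneg_eq_0_iff[of "{1..m}" "\<lambda>i. f (A i)"] by auto
    qed
    then show ?case using 0 by blast
  next
    case (Suc k)
    have "\<exists>i0. 1 \<le> i0 \<and> i0 \<le> m \<and> 0 < f (A i0)"
    proof (rule ccontr)
      assume "\<nexists>i0. 1 \<le> i0 \<and> i0 \<le> m \<and> 0 < f (A i0)"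
      then have "\<forall>i\<in>{1..m}. f (A i) \<le> 0" by (auto simp: not_less)
      then have "(\<Sum>i=1..m. f (A i)) \<le> 0" by (intro sum_nonpos) blast
      then show False using Suc.prems(4) by simp
    qed
    then obtain i0 where i0: "1 \<le> i0" "i0 \<le> m" "0 < f (A i0)" by blast
    obtain j c where jc: "1 \<le> j" "j \<le> n" "c = 0 \<or> c = (1::int)"
      "\<not> effective m n (\<lambda>v. (u v - f v) + (if v = A i0 then 1 else 0) - (if v = B j then c else 0))"
      using move[OF m n i0(1,2) Suc.prems(2)] by blast
    define f' where "f' v = f v - (if v = A i0 then 1 else 0) + (if v = B j then c else 0)" for v
    have eq: "(\<lambda>v. u v - f' v) = (\<lambda>v. (u v - f v) + (if v = A i0 then 1 else 0) - (if v = B j then c else 0))"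
      by (rule ext) (simp add: f'_def)
    have ne': "\<not> effective m n (\<lambda>v. u v - f' v)" unfolding eq by (rule jc(4))
    have nn': "nonneg m n f'"
      using Suc.prems(1) i0 jc unfolding nonneg_def is_config_def f'_def
      by (auto simp del: A_in_verts B_in_verts) (auto simp: verts_def)
    have sA: "(\<Sum>i=1..m. f' (A i)) = (\<Sum>i=1..m. f (A i)) - 1"
    proof -
      have "(\<Sum>i=1..m. f' (A i)) = (\<Sum>i=1..m. f (A i) - (if i = i0 then 1 else 0))"
        by (rule sum.cong) (auto simp: f'_def)
      also have "\<dots> = (\<Sum>i=1..m. f (A i)) - 1" using i0 by (simp add: sum_subtractf)
      finally show ?thesis .
    qed
    have sB: "(\<Sum>j'=1..n. f' (B j')) = (\<Sum>j'=1..n. f (B j')) + c"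
    proof -
      have "(\<Sum>j'=1..n. f' (B j')) = (\<Sum>j'=1..n. f (B j') + (if j' = j then c else 0))"
        by (rule sum.cong) (auto simp: f'_def)
      also have "\<dots> = (\<Sum>j'=1..n. f (B j')) + c" using jc by (simp add: sum.distrib)
      finally show ?thesis .
    qed
    have "degree m n f' = degree m n f - 1 + c"
      unfolding degree_def sum_verts sA sB by simp
    then have le: "degree m n f' \<le> Inf S" using Suc.prems(3) jc(3) by auto
    have "degree m n f' \<in> S" using nn' ne' unfolding S_def by blast
    then have "Inf S \<le> degree m n f'" using bdd by (rule cInf_lower)
    then have deg': "degree m n f' = Inf S" using le by simp
    have "(\<Sum>i=1..m. f' (A i)) = int k" using sA Suc.prems(4) by simp
    then show ?case using Suc.IH[OF nn' ne' deg'] by blast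
  qed
  obtain g where g: "nonneg m n g" "\<not> effective m n (\<lambda>v. u v - g v)" "degree m n g = Inf S"
    "\<forall>i\<in>{1..m}. g (A i) = 0"
  proof -
    have "\<forall>i\<in>{1..m}. 0 \<le> fmin (A i)" using fmin(1) by (auto simp: nonneg_def)
    then have "0 \<le> (\<Sum>i=1..m. fmin (A i))" by (intro sum_nonneg) blast
    then have "(\<Sum>i=1..m. fmin (A i)) = int (nat (\<Sum>i=1..m. fmin (A i)))" by simp
    then show ?thesis using main[OF fmin] that by blast
  qed
  have "rank_proof m n u g" using g by (simp add: rank_proof_def rank_eq)
  moreover have "support m n g \<subseteq> B ` {1..n}"
  proof
    fix c assume c: "c \<in> support m n g"
    show "c \<in> B ` {1..n}"
    proof (cases c)
      case (A i) then show ?thesis using c g(4) by (auto simp: support_def)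
    next
      case (B j) then show ?thesis using c by (auto simp: support_def)
    qed
  qed
  ultimately show ?thesis using g(4) by blast
qed

end
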